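(* Let $n\ge0$ be an integer with $\chi_n<c^2$, and let $x_1<x_2<\dots$ be the roots of $\psi_n$ in $(1,\infty)$. Then $$x_2-x_1\le x_3-x_2\le\dots\le x_{k+1}-x_k\le\dots\le\frac{\pi}{c}.$$
   Context: For a real number $c>0$, let $\psi_0,\psi_1,\dots$ be the prolate spheroidal wave functions of band limit $c$: the real $L^2[-1,1]$-normalized eigenfunctions of $F_c[\varphi](x)=\int_{-1}^1\varphi(t)e^{icxt}\,dt$ with eigenvalues $\lambda_n$ ordered by $|\lambda_n|\ge|\lambda_{n+1}|$, extended to entire functions by $\lambda_n\psi_n(x)=\int_{-1}^1\psi_n(t)e^{icxt}\,dt$. $\chi_0<\chi_1<\dots$ are the positive numbers such that $\psi_n$ satisfies $(1-x^2)\psi''(x)-2x\psi'(x)+(\chi_n-c^2x^2)\psi(x)=0$ for all $x$. (Each $\psi_n$ has infinitely many roots in $(1,\infty)$.) *)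

theory Defs
  imports "HOL-Analysis.Analysis"
begin

definition Fc :: "real \<Rightarrow> (real \<Rightarrow> real) \<Rightarrow> real \<Rightarrow> complex" where
  "Fc c \<phi> x = integral {-1..1} (\<lambda>t. complex_of_real (\<phi> t) * exp (\<i> * complex_of_real (c * x * t)))"

text \<open>psi, lam, chi are the prolate spheroidal wave functions of band limit c
  (extended to the real line), their eigenvalues with respect to F_c, and the
  eigenvalues of the differential operator.\<close>
definition pswf_system ::
  "real \<Rightarrow> (nat \<Rightarrow> real \<Rightarrow> real) \<Rightarrow> (nat \<Rightarrow> complex) \<Rightarrow> (nat \<Rightarrow> real) \<Rightarrow> bool" where
  "pswf_system c \<psi> lam chi \<longleftrightarrow>
     0 < c \<and>
     (\<forall>n. continuous_on UNIV (\<psi> n)) \<and>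
     (\<forall>n. integral {-1..1} (\<lambda>t. (\<psi> n t)^2) = 1) \<and>
     (\<forall>n x. lam n * complex_of_real (\<psi> n x) = Fc c (\<psi> n) x) \<and>
     (\<forall>n. norm (lam n) \<ge> norm (lam (Suc n))) \<and>
     (\<forall>\<phi> \<mu>. continuous_on {-1..1} \<phi> \<and> (\<exists>x\<in>{-1..1}. \<phi> x \<noteq> 0) \<and>
        (\<forall>x\<in>{-1..1}. \<mu> * complex_of_real (\<phi> x) = Fc c \<phi> x)
        \<longrightarrow> (\<exists>n a. \<forall>x\<in>{-1..1}. \<phi> x = a * \<psi> n x)) \<and>
     strict_mono chi \<and> (\<forall>n. 0 < chi n) \<and>
     (\<forall>n x. \<psi> n differentiable (at x) \<and> deriv (\<psi> n) differentiable (at x)) \<and>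
     (\<forall>n x. (1 - x^2) * deriv (deriv (\<psi> n)) x - 2 * x * deriv (\<psi> n) x
              + (chi n - c^2 * x^2) * \<psi> n x = 0)"

end

theory Submission
  imports Defs
begin

lemma left_zero_deriv_nonpos:
  fixes g :: "real \<Rightarrow> real" and a e D :: real
  assumes "a < e" "(g has_real_derivative D) (at e)" "g e = 0"
    and "\<forall>t\<in>{a<..<e}. g t > 0"
  shows "D \<le> 0"
proof (rule ccontr)
  assume "\<not> D \<le> 0"
  then have "D > 0" by simp
  from DERIV_pos_inc_left[OF assms(2) this] obtain d where d: "d > 0"
    "\<forall>h>0. h < d \<longrightarrow> g (e - h) < g e" by blast
  define h where "h = min (d/2) ((e-a)/2)"
  have "h > 0" using d assms(1) by (auto simp: h_def)
  have "h < d" "h < e - a" using d(1) assms(1) by (auto simp: h_def min_def)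
  then have "g (e - h) < 0" using d assms(3) \<open>h > 0\<close> by auto
  moreover have "e - h \<in> {a<..<e}" using \<open>h>0\<close> \<open>h < e - a\<close> by auto
  ultimately show False using assms(4) by force
qed

lemma sturm_core:
  fixes f f' g g' Qf Qg :: "real \<Rightarrow> real" and a e :: real
  assumes ae: "a < e"
   and df: "\<forall>t\<in>{a..e}. (f has_real_derivative f' t) (at t)"
   and df': "\<forall>t\<in>{a..e}. (f' has_real_derivative (- (Qf t * f t))) (at t)"
   and dg: "\<forall>t\<in>{a..e}. (g has_real_derivative g' t) (at t)"
   and dg': "\<forall>t\<in>{a..e}. (g' has_real_derivative (- (Qg t * g t))) (at t)"
   and Q: "\<forall>t\<in>{a<..<e}. Qg t < Qf t"
   and fa: "f a = 0" and ga: "g a = 0" and ge: "g e = 0"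
   and fpos: "\<forall>t\<in>{a<..e}. f t > 0" and gpos: "\<forall>t\<in>{a<..<e}. g t > 0"
  shows False
proof -
  define W where "W t = f' t * g t - f t * g' t" for t
  have dW: "\<And>t. a \<le> t \<Longrightarrow> t \<le> e \<Longrightarrow> (W has_real_derivative ((Qg t - Qf t) * f t * g t)) (at t)"
  proof -
    fix t assume "a \<le> t" "t \<le> e"
    then have t: "t \<in> {a..e}" by auto
    have 1: "((\<lambda>t. f' t * g t) has_real_derivative ((- (Qf t * f t)) * g t + f' t * g' t)) (at t)"
      using DERIV_mult[OF bspec[OF df' t] bspec[OF dg t]] by (rule DERIV_cong) (simp add: algebra_simps)
    have 2: "((\<lambda>t. f t * g' t) has_real_derivative (f' t * g' t + f t * (- (Qg t * g t)))) (at t)"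
      using DERIV_mult[OF bspec[OF df t] bspec[OF dg' t]] by (rule DERIV_cong) (simp add: algebra_simps)
    have "((\<lambda>t. f' t * g t - f t * g' t) has_real_derivative
        ((- (Qf t * f t)) * g t + f' t * g' t - (f' t * g' t + f t * (- (Qg t * g t))))) (at t)"
      by (rule DERIV_diff[OF 1 2])
    then show "(W has_real_derivative ((Qg t - Qf t) * f t * g t)) (at t)"
      unfolding W_def[abs_def] by (rule DERIV_cong) (simp add: algebra_simps)
  qed
  obtain z where z: "a < z" "z < e" "W e - W a = (e - a) * ((Qg z - Qf z) * f z * g z)"
    using MVT2[OF ae dW] by blast
  have "(Qg z - Qf z) * f z * g z < 0"
  proof -
    have "Qg z - Qf z < 0" using Q z by auto
    moreover have "f z * g z > 0" using fpos gpos z by auto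
    ultimately show ?thesis by (metis mult.assoc mult_neg_pos)
  qed
  then have "(e - a) * ((Qg z - Qf z) * f z * g z) < 0" using ae by (simp add: mult_pos_neg)
  then have "W e < W a" using z by linarith
  moreover have "W a = 0" using fa ga by (simp add: W_def)
  moreover have "g' e \<le> 0"
    using left_zero_deriv_nonpos[OF ae _ ge gpos] dg ae by auto
  moreover have "f e > 0" using fpos ae by auto
  moreover have "W e = f e * (- g' e)" using ge by (simp add: W_def)
  moreover have "0 \<le> f e * (- g' e)"
    using \<open>g' e \<le> 0\<close> \<open>f e > 0\<close> mult_nonneg_nonneg[of "f e" "- g' e"] by simp
  ultimately show False by linarith
qed

lemma sign_choice:
  fixes u :: "real \<Rightarrow> real"
  assumes "a < b" "\<forall>t\<in>{a..b}. isCont u t" "\<forall>t\<in>{a<..<b}. u t \<noteq> 0"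
  shows "\<exists>\<sigma>. (\<sigma> = 1 \<or> \<sigma> = -1) \<and> (\<forall>t\<in>{a<..<b}. \<sigma> * u t > 0)"
proof (rule ccontr)
  assume H: "\<not> ?thesis"
  have "\<exists>p\<in>{a<..<b}. u p < 0"
  proof -
    from H have "\<not> (\<forall>t\<in>{a<..<b}. 1 * u t > 0)" by blast
    then obtain p where "p \<in> {a<..<b}" "\<not> u p > 0" by auto
    then show ?thesis using assms(3) by (metis linorder_neqE_linordered_idom)
  qed
  then obtain p where p: "p \<in> {a<..<b}" "u p < 0" by blast
  have "\<exists>q\<in>{a<..<b}. u q > 0"
  proof -
    from H have "\<not> (\<forall>t\<in>{a<..<b}. -1 * u t > 0)" by blast
    then obtain q where "q \<in> {a<..<b}" "\<not> -1 * u q > 0" by auto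
    then show ?thesis using assms(3) by (metis linorder_neqE_linordered_idom mult_minus1 neg_0_less_iff_less)
  qed
  then obtain q where q: "q \<in> {a<..<b}" "u q > 0" by blast
  show False
  proof (cases "p \<le> q")
    case True
    have "\<forall>x. p \<le> x \<and> x \<le> q \<longrightarrow> isCont u x" using assms(2) p q by auto
    from IVT[of u p 0 q, OF _ _ True this] p q obtain x where "p \<le> x" "x \<le> q" "u x = 0" by auto
    then show False using assms(3) p q by auto
  next
    case False
    then have "q \<le> p" by simp
    have "\<forall>x. q \<le> x \<and> x \<le> p \<longrightarrow> isCont u x" using assms(2) p q by auto
    from IVT2[of u p 0 q, OF _ _ \<open>q\<le>p\<close> this] p q obtain x where "q \<le> x" "x \<le> p" "u x = 0" by auto
    then show False using assms(3) p q by auto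
  qed
qed


lemma u_derivs:
  fixes pp pa pb :: "real \<Rightarrow> real" and c ch t :: real
  assumes t: "1 < t" and d1: "(pp has_real_derivative pa t) (at t)"
   and d2: "(pa has_real_derivative pb t) (at t)"
   and ode: "(1 - t^2) * pb t - 2*t*pa t + (ch - c^2*t^2) * pp t = 0"
  shows "((\<lambda>t. sqrt(t^2-1) * pp t) has_real_derivative (t / sqrt(t^2-1) * pp t + sqrt(t^2-1) * pa t)) (at t)"
   and "((\<lambda>t. t / sqrt(t^2-1) * pp t + sqrt(t^2-1) * pa t) has_real_derivative
        -((c^2 + (c^2-ch)/(t^2-1) + 1/(t^2-1)^2) * (sqrt(t^2-1) * pp t))) (at t)"
proof -
  have tp: "t^2 - 1 > 0" using one_less_power[OF t, of 2] by simp
  define s where "s = sqrt(t^2-1)"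
  have sp: "s > 0" using tp by (simp add: s_def)
  have s2: "s^2 = t^2 - 1" using tp by (simp add: s_def)
  have ds: "((\<lambda>t. sqrt(t^2-1)) has_real_derivative t / s) (at t)"
    using tp sp unfolding s_def by (auto intro!: derivative_eq_intros simp: field_simps)
  have dr: "((\<lambda>t. t / sqrt(t^2-1)) has_real_derivative (-1/s^3)) (at t)"
  proof -
    have "((\<lambda>t. t / sqrt(t^2-1)) has_real_derivative ((s - t * t / s) / s^2)) (at t)"
      using DERIV_divide[OF DERIV_ident ds] sp unfolding s_def by auto
    moreover have "(s - t * t / s) / s^2 = -1/s^3"
    proof -
      have "t * t = s^2 + 1" using s2 by (simp add: power2_eq_square)
      then have "(s - t * t / s) / s^2 = (s - (s^2 + 1) / s) / s^2" by simp
      also have "\<dots> = -1/s^3" using sp by (simp add: field_simps power2_eq_square power3_eq_cube)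
      finally show ?thesis .
    qed
    ultimately show ?thesis by simp
  qed
  show "((\<lambda>t. sqrt(t^2-1) * pp t) has_real_derivative (t / sqrt(t^2-1) * pp t + sqrt(t^2-1) * pa t)) (at t)"
    using DERIV_mult[OF ds d1] unfolding s_def by (rule DERIV_cong) (simp add: algebra_simps)
  have "((\<lambda>t. t / sqrt(t^2-1) * pp t + sqrt(t^2-1) * pa t) has_real_derivative
      (-1/s^3 * pp t + t/s * pa t) + (t/s * pa t + s * pb t)) (at t)"
    using DERIV_add[OF DERIV_mult[OF dr d1] DERIV_mult[OF ds d2]] unfolding s_def by (rule DERIV_cong) (simp add: algebra_simps)
  moreover have "(-1/s^3 * pp t + t/s * pa t) + (t/s * pa t + s * pb t)
     = -((c^2 + (c^2-ch)/(t^2-1) + 1/(t^2-1)^2) * (sqrt(t^2-1) * pp t))"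
  proof -
    have tt: "t^2 = s^2 + 1" using s2 by simp
    have e2: "pb t = - (2*t*pa t + (c^2*(s^2+1) - ch) * pp t) / s^2"
    proof -
      have "pb t * s^2 = pb t * t^2 - pb t" using s2 by (simp add: right_diff_distrib)
      then have "pb t * s^2 = - (2*t*pa t + (c^2*t^2 - ch) * pp t)" using ode by (simp add: algebra_simps)
      then show ?thesis using sp tt by (simp add: field_simps)
    qed
    show ?thesis unfolding s_def[symmetric] s2[symmetric] e2
      using sp by (simp add: field_simps power2_eq_square power3_eq_cube)
  qed
  ultimately show "((\<lambda>t. t / sqrt(t^2-1) * pp t + sqrt(t^2-1) * pa t) has_real_derivative
        -((c^2 + (c^2-ch)/(t^2-1) + 1/(t^2-1)^2) * (sqrt(t^2-1) * pp t))) (at t)" by simp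
qed

lemma spacing_pi:
  fixes u u1 Q :: "real \<Rightarrow> real" and c a b :: real
  assumes du: "\<forall>t>1. (u has_real_derivative u1 t) (at t)"
    and du1: "\<forall>t>1. (u1 has_real_derivative -(Q t * u t)) (at t)"
    and Qgt: "\<forall>t>1. c^2 < Q t" and c: "c > 0" and a1: "1 < a" and ab: "a < b"
    and ua: "u a = 0" and ub: "u b = 0" and nz: "\<forall>t\<in>{a<..<b}. u t \<noteq> 0"
  shows "b - a \<le> pi / c"
proof (rule ccontr)
  assume "\<not> b - a \<le> pi / c"
  then have lt: "a + pi / c < b" by simp
  have "\<forall>t\<in>{a..b}. isCont u t"
  proof
    fix t assume "t \<in> {a..b}"
    then have "t > 1" using a1 by auto
    then show "isCont u t" using du DERIV_isCont by blast
  qed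
  from sign_choice[OF ab this nz] obtain \<sigma> :: real where
    s: "\<sigma> = 1 \<or> \<sigma> = -1" "\<forall>t\<in>{a<..<b}. \<sigma> * u t > 0" by blast
  define e where "e = a + pi / c"
  have ae: "a < e" using c by (simp add: e_def)
  show False
  proof (rule sturm_core[of a e "\<lambda>t. \<sigma> * u t" "\<lambda>t. \<sigma> * u1 t" Q
        "\<lambda>t. sin (c * (t - a))" "\<lambda>t. c * cos (c * (t - a))" "\<lambda>t. c^2"])
    show "a < e" by fact
    show "\<forall>t\<in>{a..e}. ((\<lambda>t. \<sigma> * u t) has_real_derivative \<sigma> * u1 t) (at t)"
      using du a1 by (auto intro!: DERIV_cmult)
    show "\<forall>t\<in>{a..e}. ((\<lambda>t. \<sigma> * u1 t) has_real_derivative - (Q t * (\<sigma> * u t))) (at t)"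
    proof
      fix t assume "t \<in> {a..e}"
      then have "t > 1" using a1 by auto
      then show "((\<lambda>t. \<sigma> * u1 t) has_real_derivative - (Q t * (\<sigma> * u t))) (at t)"
        using DERIV_cmult[OF du1[rule_format, OF \<open>t>1\<close>], of \<sigma>]
        by (rule_tac DERIV_cong) (auto simp: algebra_simps)
    qed
    show "\<forall>t\<in>{a..e}. ((\<lambda>t. sin (c * (t - a))) has_real_derivative c * cos (c * (t - a))) (at t)"
      by (auto intro!: derivative_eq_intros)
    show "\<forall>t\<in>{a..e}. ((\<lambda>t. c * cos (c * (t - a))) has_real_derivative - (c^2 * sin (c * (t - a)))) (at t)"
      by (auto intro!: derivative_eq_intros simp: power2_eq_square)
    show "\<forall>t\<in>{a<..<e}. c^2 < Q t" using Qgt a1 by auto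
    show "\<sigma> * u a = 0" using ua by simp
    show "sin (c * (a - a)) = 0" by simp
    show "sin (c * (e - a)) = 0" using c by (simp add: e_def)
    show "\<forall>t\<in>{a<..e}. 0 < \<sigma> * u t" using s(2) lt by (auto simp: e_def)
    show "\<forall>t\<in>{a<..<e}. 0 < sin (c * (t - a))"
    proof
      fix t assume "t \<in> {a<..<e}"
      then have 1: "0 < c * (t - a)" "t - a < pi / c" using c by (auto simp: e_def)
      then have "(t - a) * c < pi" using c pos_less_divide_eq by blast
      then show "0 < sin (c * (t - a))" using 1 by (intro sin_gt_zero) (auto simp: mult.commute)
    qed
  qed
qed

lemma spacing_mono:
  fixes u u1 Q :: "real \<Rightarrow> real" and a b d :: real
  assumes du: "\<forall>t>1. (u has_real_derivative u1 t) (at t)"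
    and du1: "\<forall>t>1. (u1 has_real_derivative -(Q t * u t)) (at t)"
    and Qdec: "\<forall>s t. 1 < s \<longrightarrow> s < t \<longrightarrow> Q t < Q s"
    and a1: "1 < a" and ab: "a < b" and bd: "b < d"
    and ua: "u a = 0" and ub: "u b = 0" and ud: "u d = 0"
    and nz1: "\<forall>t\<in>{a<..<b}. u t \<noteq> 0" and nz2: "\<forall>t\<in>{b<..<d}. u t \<noteq> 0"
  shows "b - a \<le> d - b"
proof (rule ccontr)
  assume "\<not> b - a \<le> d - b"
  then have lt: "a + (d - b) < b" by simp
  have "\<forall>t\<in>{a..b}. isCont u t"
  proof
    fix t assume "t \<in> {a..b}"
    then have "t > 1" using a1 by auto
    then show "isCont u t" using du DERIV_isCont by blast
  qed
  from sign_choice[OF ab this nz1] obtain \<sigma> :: real where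
    s: "\<sigma> = 1 \<or> \<sigma> = -1" "\<forall>t\<in>{a<..<b}. \<sigma> * u t > 0" by blast
  have "\<forall>t\<in>{b..d}. isCont u t"
  proof
    fix t assume "t \<in> {b..d}"
    then have "t > 1" using a1 ab by auto
    then show "isCont u t" using du DERIV_isCont by blast
  qed
  from sign_choice[OF bd this nz2] obtain \<tau> :: real where
    r: "\<tau> = 1 \<or> \<tau> = -1" "\<forall>t\<in>{b<..<d}. \<tau> * u t > 0" by blast
  define e where "e = a + (d - b)"
  define h where "h = b - a"
  have ae: "a < e" using bd by (simp add: e_def)
  have h0: "h > 0" using ab by (simp add: h_def)
  have dsh: "\<And>t. t > 1 \<Longrightarrow> ((\<lambda>x. u (x + h)) has_real_derivative u1 (t + h)) (at t)"
    using du h0 by (subst DERIV_shift[symmetric]) auto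
  have dsh1: "\<And>t. t > 1 \<Longrightarrow> ((\<lambda>x. u1 (x + h)) has_real_derivative -(Q (t+h) * u (t+h))) (at t)"
    using du1 h0 by (subst DERIV_shift[symmetric]) auto
  show False
  proof (rule sturm_core[of a e "\<lambda>t. \<sigma> * u t" "\<lambda>t. \<sigma> * u1 t" Q
        "\<lambda>t. \<tau> * u (t + h)" "\<lambda>t. \<tau> * u1 (t + h)" "\<lambda>t. Q (t + h)"])
    show "a < e" by fact
    show "\<forall>t\<in>{a..e}. ((\<lambda>t. \<sigma> * u t) has_real_derivative \<sigma> * u1 t) (at t)"
      using du a1 by (auto intro!: DERIV_cmult)
    show "\<forall>t\<in>{a..e}. ((\<lambda>t. \<sigma> * u1 t) has_real_derivative - (Q t * (\<sigma> * u t))) (at t)"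
    proof
      fix t assume "t \<in> {a..e}"
      then have "t > 1" using a1 by auto
      then show "((\<lambda>t. \<sigma> * u1 t) has_real_derivative - (Q t * (\<sigma> * u t))) (at t)"
        using DERIV_cmult[OF du1[rule_format, OF \<open>t>1\<close>], of \<sigma>]
        by (rule_tac DERIV_cong) (auto simp: algebra_simps)
    qed
    show "\<forall>t\<in>{a..e}. ((\<lambda>t. \<tau> * u (t + h)) has_real_derivative \<tau> * u1 (t + h)) (at t)"
      using dsh a1 by (auto intro!: DERIV_cmult)
    show "\<forall>t\<in>{a..e}. ((\<lambda>t. \<tau> * u1 (t + h)) has_real_derivative - (Q (t + h) * (\<tau> * u (t + h)))) (at t)"
    proof
      fix t assume "t \<in> {a..e}"
      then have "t > 1" using a1 by auto
      then show "((\<lambda>t. \<tau> * u1 (t + h)) has_real_derivative - (Q (t + h) * (\<tau> * u (t + h)))) (at t)"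
        using DERIV_cmult[OF dsh1[OF \<open>t>1\<close>], of \<tau>]
        by (rule_tac DERIV_cong) (auto simp: algebra_simps)
    qed
    show "\<forall>t\<in>{a<..<e}. Q (t + h) < Q t" using Qdec a1 h0 by auto
    show "\<sigma> * u a = 0" using ua by simp
    show "\<tau> * u (a + h) = 0" using ub by (simp add: h_def)
    show "\<tau> * u (e + h) = 0" using ud by (simp add: h_def e_def)
    show "\<forall>t\<in>{a<..e}. 0 < \<sigma> * u t" using s(2) lt by (auto simp: e_def)
    show "\<forall>t\<in>{a<..<e}. 0 < \<tau> * u (t + h)"
      using r(2) by (auto simp: e_def h_def)
  qed
qed

theorem theorem33:
  fixes c :: real and \<psi> :: "nat \<Rightarrow> real \<Rightarrow> real" and lam :: "nat \<Rightarrow> complex"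
    and chi :: "nat \<Rightarrow> real" and n :: nat and x :: "nat \<Rightarrow> real"
  assumes "pswf_system c \<psi> lam chi"
    and "chi n < c^2"
    and "strict_mono x"
    and "range x = {t. 1 < t \<and> \<psi> n t = 0}"
  shows "\<forall>k. x (Suc k) - x k \<le> x (Suc (Suc k)) - x (Suc k) \<and> x (Suc k) - x k \<le> pi / c"
proof -
  note P = assms(1)[unfolded pswf_system_def]
  have c: "c > 0" using P by blast
  have diff: "\<And>t. \<psi> n differentiable (at t) \<and> deriv (\<psi> n) differentiable (at t)" using P by blast
  have ode: "\<And>t. (1 - t^2) * deriv (deriv (\<psi> n)) t - 2 * t * deriv (\<psi> n) t
              + (chi n - c^2 * t^2) * \<psi> n t = 0" using P by blast
  define u where "u t = sqrt (t^2 - 1) * \<psi> n t" for t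
  define u1 where "u1 t = t / sqrt(t^2-1) * \<psi> n t + sqrt(t^2-1) * deriv (\<psi> n) t" for t
  define Q where "Q t = c^2 + (c^2 - chi n)/(t^2-1) + 1/(t^2-1)^2" for t
  have d1: "\<And>t. (\<psi> n has_real_derivative deriv (\<psi> n) t) (at t)"
    using diff DERIV_deriv_iff_real_differentiable by blast
  have d2: "\<And>t. (deriv (\<psi> n) has_real_derivative deriv (deriv (\<psi> n)) t) (at t)"
    using diff DERIV_deriv_iff_real_differentiable by blast
  have du: "\<forall>t>1. (u has_real_derivative u1 t) (at t)"
  proof (intro allI impI)
    fix t :: real assume "1 < t"
    from u_derivs(1)[where pp="\<psi> n" and pa="deriv (\<psi> n)" and pb="deriv (deriv (\<psi> n))" and ch="chi n" and c=c, OF this d1[of t] d2[of t] ode[of t]] show "(u has_real_derivative u1 t) (at t)"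
      unfolding u_def[abs_def] u1_def .
  qed
  have du1: "\<forall>t>1. (u1 has_real_derivative -(Q t * u t)) (at t)"
  proof (intro allI impI)
    fix t :: real assume "1 < t"
    from u_derivs(2)[where pp="\<psi> n" and pa="deriv (\<psi> n)" and pb="deriv (deriv (\<psi> n))" and ch="chi n" and c=c, OF this d1[of t] d2[of t] ode[of t]] show "(u1 has_real_derivative -(Q t * u t)) (at t)"
      unfolding u_def u1_def[abs_def] Q_def .
  qed
  have Qgt: "\<forall>t>1. c^2 < Q t"
  proof (intro allI impI)
    fix t :: real assume "t > 1"
    then have tp: "t^2 - 1 > 0" using one_less_power[OF \<open>t>1\<close>, of 2] by simp
    then have "(c^2 - chi n)/(t^2-1) > 0" using assms(2) by simp
    moreover have "1/(t^2-1)^2 > 0" using tp by simp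
    ultimately have "0 < (c^2 - chi n)/(t^2-1) + 1/(t^2-1)^2" by linarith
    then show "c^2 < Q t" unfolding Q_def by linarith
  qed
  have Qdec: "\<forall>s t. 1 < s \<longrightarrow> s < t \<longrightarrow> Q t < Q s"
  proof (intro allI impI)
    fix s t :: real assume st: "1 < s" "s < t"
    have A: "s^2 - 1 > 0" using one_less_power[OF \<open>1<s\<close>, of 2] by simp
    have AB: "s^2 - 1 < t^2 - 1" using st power_strict_mono[of s t 2] by simp
    have k: "c^2 - chi n > 0" using assms(2) by simp
    have 1: "(c^2 - chi n)/(t^2-1) < (c^2 - chi n)/(s^2-1)"
      using divide_strict_left_mono[OF AB k] A AB by simp
    have AB2: "(s^2 - 1)^2 < (t^2 - 1)^2" using AB A power_strict_mono[of "s^2-1" "t^2-1" 2] by simp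
    have 2: "1/(t^2-1)^2 < 1/(s^2-1)^2"
      using divide_strict_left_mono[OF AB2, of 1] A AB by simp
    show "Q t < Q s" using 1 2 by (simp add: Q_def)
  qed
  have x1: "\<And>k. 1 < x k" and x0: "\<And>k. \<psi> n (x k) = 0" using assms(4) by blast+
  have ux: "\<And>k. u (x k) = 0" using x0 by (simp add: u_def)
  have nz: "\<And>k. \<forall>t\<in>{x k<..<x (Suc k)}. u t \<noteq> 0"
  proof
    fix k t assume t: "t \<in> {x k<..<x (Suc k)}"
    then have t1: "t > 1" using x1[of k] by auto
    show "u t \<noteq> 0"
    proof
      assume "u t = 0"
      moreover have "sqrt (t^2 - 1) > 0" using one_less_power[OF t1, of 2] by simp
      ultimately have "\<psi> n t = 0" by (simp add: u_def)
      then have "t \<in> range x" using assms(4) t1 by blast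
      then obtain j where j: "t = x j" by blast
      then have "k < j" "j < Suc k" using t strict_mono_less[OF assms(3)] by auto
      then show False by simp
    qed
  qed
  have xs: "\<And>k. x k < x (Suc k)" using assms(3) by (simp add: strict_mono_Suc_iff)
  show ?thesis
  proof
    fix k
    show "x (Suc k) - x k \<le> x (Suc (Suc k)) - x (Suc k) \<and> x (Suc k) - x k \<le> pi / c"
    proof
      show "x (Suc k) - x k \<le> x (Suc (Suc k)) - x (Suc k)"
        by (rule spacing_mono[OF du du1 Qdec x1 xs xs ux ux ux nz nz])
      show "x (Suc k) - x k \<le> pi / c"
        by (rule spacing_pi[OF du du1 Qgt c x1 xs ux ux nz])
    qed
  qed
qed

end
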